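(* Let $n,m,k$ be positive integers with $m\le n$. Let $W=(w_{ij})_{i,j=1}^m$ be a weighing matrix of order $m$ and weight $k$, and let $K_{i,j}$ ($i,j\in\{1,\ldots,m\}$) be $n\times n$ monomial $(0,1)$-matrices such that $\sum_{l=1}^mK_{i,l}K_{j,l}^\top$ is a $(0,1)$-matrix for all distinct $i,j$. For $i\in\{1,\ldots,m\}$ let $W_i$ be the $nm\times nm$ block matrix whose $(a,b)$-block is $w_{ab}K_{i,b}$ ($a,b\in\{1,\ldots,m\}$). Then (1) each $W_i$ is a weighing matrix of order $nm$ and weight $k$; (2) $W_1,\ldots,W_m$ are mutually quasi-unbiased weighing matrices for the parameters $(nm,k,k^2,1)$.
   Context: A weighing matrix of order $n$ and weight $k$ is an $n\times n$ $(0,1,-1)$-matrix $W$ with $WW^\top=kI_n$. A monomial $(0,1)$-matrix is a permutation matrix. Weighing matrices $W_1,W_2$ of order $n$ and weight $k$ are quasi-unbiased for parameters $(n,k,l,a)$ if $\frac1{\sqrt a}W_1W_2^\top$ is a weighing matrix of order $n$ and weight $l$; mutually quasi-unbiased means pairwise quasi-unbiased. *)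

theory Defs
  imports "Jordan_Normal_Form.Matrix"
begin

definition weighing_matrix :: "nat \<Rightarrow> nat \<Rightarrow> 'a::comm_ring_1 mat \<Rightarrow> bool" where
  "weighing_matrix n k W \<longleftrightarrow>
     W \<in> carrier_mat n n \<and>
     (\<forall>i<n. \<forall>j<n. W $$ (i,j) \<in> {0, 1, -1}) \<and>
     W * transpose_mat W = of_nat k \<cdot>\<^sub>m 1\<^sub>m n"

definition zero_one_mat :: "'a::zero_neq_one mat \<Rightarrow> bool" where
  "zero_one_mat A \<longleftrightarrow> (\<forall>i<dim_row A. \<forall>j<dim_col A. A $$ (i,j) \<in> {0, 1})"

text \<open>Monomial (0,1)-matrix = permutation matrix: an n x n (0,1)-matrix with exactly
one 1 in every row and every column.\<close>
definition perm_matrix :: "nat \<Rightarrow> 'a::zero_neq_one mat \<Rightarrow> bool" where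
  "perm_matrix n P \<longleftrightarrow>
     P \<in> carrier_mat n n \<and> zero_one_mat P \<and>
     (\<forall>i<n. \<exists>!j. j < n \<and> P $$ (i,j) = 1) \<and>
     (\<forall>j<n. \<exists>!i. i < n \<and> P $$ (i,j) = 1)"

definition quasi_unbiased :: "nat \<Rightarrow> nat \<Rightarrow> nat \<Rightarrow> nat \<Rightarrow> int mat \<Rightarrow> int mat \<Rightarrow> bool" where
  "quasi_unbiased n k l a W1 W2 \<longleftrightarrow>
     weighing_matrix n k W1 \<and> weighing_matrix n k W2 \<and>
     weighing_matrix n l ((1 / sqrt (real a)) \<cdot>\<^sub>m
        (map_mat real_of_int W1 * transpose_mat (map_mat real_of_int W2)))"

definition block_W :: "nat \<Rightarrow> nat \<Rightarrow> int mat \<Rightarrow> (nat \<Rightarrow> nat \<Rightarrow> int mat) \<Rightarrow> nat \<Rightarrow> int mat" where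
  "block_W n m W K i = mat (n*m) (n*m)
     (\<lambda>(p,q). W $$ (p div n, q div n) * K i (q div n) $$ (p mod n, q mod n))"

end

theory Submission
  imports Defs "Jordan_Normal_Form.Determinant"
begin

lemma mult_transpose_index:
  assumes "A \<in> carrier_mat x y" "B \<in> carrier_mat z y" "i < x" "j < z"
  shows "(A * transpose_mat B) $$ (i,j) = (\<Sum>l\<in>{0..<y}. A $$ (i,l) * B $$ (j,l))"
  using assms by (simp add: scalar_prod_def)

lemma perm_PPt:
  assumes "perm_matrix n (P::int mat)" "r<n" "r'<n"
  shows "(P * transpose_mat P) $$ (r,r') = (if r = r' then 1 else 0)"
proof -
  have P: "P \<in> carrier_mat n n"
    and row: "\<forall>i<n. \<exists>!j. j<n \<and> P$$(i,j)=1" and col: "\<forall>j<n. \<exists>!i. i<n \<and> P$$(i,j)=1"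
    using assms(1) unfolding perm_matrix_def by auto
  have zo: "\<forall>i<n. \<forall>j<n. P$$(i,j) \<in> {0,1}"
    using assms(1) P unfolding perm_matrix_def zero_one_mat_def by (metis carrier_matD)
  obtain j where j: "j<n" "P$$(r,j)=1" using row assms(2) by blast
  have others: "\<forall>s<n. s\<noteq>j \<longrightarrow> P$$(r,s)=0"
  proof (intro allI impI)
    fix s assume s: "s<n" "s\<noteq>j"
    show "P$$(r,s)=0"
    proof (rule ccontr)
      assume "P$$(r,s)\<noteq>0"
      then have "P$$(r,s)=1" using zo s assms(2) by auto
      then show False using row assms(2) j s by blast
    qed
  qed
  have "(P * transpose_mat P) $$ (r,r') = (\<Sum>s\<in>{0..<n}. P$$(r,s)*P$$(r',s))"
    using mult_transpose_index[OF P P assms(2,3)] .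
  also have "\<dots> = P$$(r,j)*P$$(r',j) + (\<Sum>s\<in>{0..<n}-{j}. P$$(r,s)*P$$(r',s))"
    using j by (simp add: sum.remove)
  also have "(\<Sum>s\<in>{0..<n}-{j}. P$$(r,s)*P$$(r',s)) = 0"
    using others by (intro sum.neutral) auto
  finally have eq: "(P * transpose_mat P) $$ (r,r') = P$$(r',j)" using j by simp
  show ?thesis
  proof (cases "r = r'")
    case True then show ?thesis using eq j by simp
  next
    case False
    have "P$$(r',j) \<noteq> 1" using col j False assms by blast
    then have "P$$(r',j) = 0" using zo assms j by auto
    then show ?thesis using eq False by simp
  qed
qed

lemma sum_blocks:
  fixes m n :: nat
  shows "(\<Sum>q\<in>{0..<m*n}. g q) = (\<Sum>b\<in>{0..<m}. \<Sum>s\<in>{0..<n}. g (b*n+s))"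
proof (induction m)
  case 0 then show ?case by simp
next
  case (Suc m)
  have "(\<Sum>q\<in>{0..<Suc m*n}. g q) = (\<Sum>q\<in>{0..<m*n}. g q) + (\<Sum>q\<in>{m*n..<m*n+n}. g q)"
    by (simp add: sum.atLeastLessThan_concat add.commute)
  also have "(\<Sum>q\<in>{m*n..<m*n+n}. g q) = (\<Sum>s\<in>{0..<n}. g (m*n+s))"
    using sum.shift_bounds_nat_ivl[of g 0 "m*n" n] by (simp add: add.commute)
  finally show ?case using Suc by simp
qed


lemma block_carrier: "block_W n m W K i \<in> carrier_mat (n*m) (n*m)"
  by (simp add: block_W_def)

lemma block_index: "p < n*m \<Longrightarrow> q < n*m \<Longrightarrow>
  block_W n m W K i $$ (p,q) = W $$ (p div n, q div n) * K i (q div n) $$ (p mod n, q mod n)"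
  by (simp add: block_W_def)

lemma block_prod:
  fixes W :: "int mat"
  assumes Kc: "\<And>b. b<m \<Longrightarrow> K i b \<in> carrier_mat n n"  "\<And>b. b<m \<Longrightarrow> K j b \<in> carrier_mat n n"
    and n: "0 < n" and p: "p < n*m" "p' < n*m"
  shows "(block_W n m W K i * transpose_mat (block_W n m W K j)) $$ (p,p') =
    (\<Sum>b\<in>{0..<m}. W$$(p div n,b)*W$$(p' div n,b) * (K i b * transpose_mat (K j b))$$(p mod n, p' mod n))"
proof -
  have "(block_W n m W K i * transpose_mat (block_W n m W K j)) $$ (p,p') =
     (\<Sum>q\<in>{0..<m*n}. block_W n m W K i $$ (p,q) * block_W n m W K j $$ (p',q))"
    using mult_transpose_index[OF block_carrier block_carrier p] by (simp add: mult.commute)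
  also have "\<dots> = (\<Sum>b\<in>{0..<m}. \<Sum>s\<in>{0..<n}. block_W n m W K i $$ (p,b*n+s) * block_W n m W K j $$ (p',b*n+s))"
    by (rule sum_blocks)
  also have "\<dots> = (\<Sum>b\<in>{0..<m}. \<Sum>s\<in>{0..<n}. W$$(p div n,b)*W$$(p' div n,b) * (K i b $$ (p mod n, s) * K j b $$ (p' mod n, s)))"
  proof (rule sum.cong[OF refl], rule sum.cong[OF refl])
    fix b s assume b: "b \<in> {0..<m}" and s: "s \<in> {0..<n}"
    have q: "b*n+s < n*m"
    proof -
      have "b*n+s < b*n+n" using s by simp
      also have "\<dots> = (b+1)*n" by simp
      also have "\<dots> \<le> m*n" using b by (intro mult_right_mono) auto
      finally show ?thesis by (simp add: mult.commute)
    qed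
    have d: "(b*n+s) div n = b" "(b*n+s) mod n = s" using s n by auto
    show "block_W n m W K i $$ (p,b*n+s) * block_W n m W K j $$ (p',b*n+s) =
      W$$(p div n,b)*W$$(p' div n,b) * (K i b $$ (p mod n, s) * K j b $$ (p' mod n, s))"
      using block_index[OF p(1) q] block_index[OF p(2) q] d by (simp add: algebra_simps)
  qed
  also have "\<dots> = (\<Sum>b\<in>{0..<m}. W$$(p div n,b)*W$$(p' div n,b) * (K i b * transpose_mat (K j b))$$(p mod n, p' mod n))"
  proof (rule sum.cong[OF refl])
    fix b assume b: "b \<in> {0..<m}"
    have r: "p mod n < n" "p' mod n < n" using n by auto
    show "(\<Sum>s\<in>{0..<n}. W$$(p div n,b)*W$$(p' div n,b) * (K i b $$ (p mod n, s) * K j b $$ (p' mod n, s))) =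
      W$$(p div n,b)*W$$(p' div n,b) * (K i b * transpose_mat (K j b))$$(p mod n, p' mod n)"
      using mult_transpose_index[OF Kc(1) Kc(2) r, of b b] b by (simp add: sum_distrib_left)
  qed
  finally show ?thesis .
qed


lemma divlt: "(p::nat) < n*m \<Longrightarrow> p div n < m"
  by (simp add: less_mult_imp_div_less mult.commute)

lemma modlt: "(p::nat) < n*m \<Longrightarrow> p mod n < n"
  by (metis mod_less_divisor mult_is_0 not_gr_zero not_less_zero)

lemma eq_divmod: "0 < (n::nat) \<Longrightarrow> (p = p') = (p div n = p' div n \<and> p mod n = p' mod n)"
  by (metis div_mult_mod_eq)

lemma block_weighing:
  fixes W :: "int mat"
  assumes n: "0 < n" and Wm: "weighing_matrix m k W"
    and Kp: "\<And>b. b<m \<Longrightarrow> perm_matrix n (K i b)"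
  shows "weighing_matrix (n*m) k (block_W n m W K i)"
proof -
  have Wc: "W \<in> carrier_mat m m" and We: "\<forall>i<m. \<forall>j<m. W $$ (i,j) \<in> {0, 1, -1}"
    and WW: "W * transpose_mat W = of_nat k \<cdot>\<^sub>m 1\<^sub>m m" using Wm unfolding weighing_matrix_def by auto
  have Kc: "\<And>b. b<m \<Longrightarrow> K i b \<in> carrier_mat n n" using Kp unfolding perm_matrix_def by auto
  have Ke: "\<And>b r s. b<m \<Longrightarrow> r<n \<Longrightarrow> s<n \<Longrightarrow> K i b $$ (r,s) \<in> {0,1}"
    using Kp Kc unfolding perm_matrix_def zero_one_mat_def by (metis carrier_matD)
  have entries: "\<forall>p<n*m. \<forall>q<n*m. block_W n m W K i $$ (p,q) \<in> {0, 1, -1}"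
  proof (intro allI impI)
    fix p q assume p: "p < n*m" and q: "q < n*m"
    have "W $$ (p div n, q div n) \<in> {0,1,-1}" using We divlt[OF p] divlt[OF q] by blast
    moreover have "K i (q div n) $$ (p mod n, q mod n) \<in> {0,1}"
      using Ke divlt[OF q] modlt[OF p] modlt[OF q] by blast
    ultimately show "block_W n m W K i $$ (p,q) \<in> {0, 1, -1}"
      unfolding block_index[OF p q] by auto
  qed
  have prod: "block_W n m W K i * transpose_mat (block_W n m W K i) = of_nat k \<cdot>\<^sub>m 1\<^sub>m (n*m)"
  proof (rule eq_matI)
    fix p p' assume p: "p < dim_row (of_nat k \<cdot>\<^sub>m 1\<^sub>m (n*m) :: int mat)" and p': "p' < dim_col (of_nat k \<cdot>\<^sub>m 1\<^sub>m (n*m) :: int mat)"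
    then have p: "p < n*m" and p': "p' < n*m" by auto
    have "(block_W n m W K i * transpose_mat (block_W n m W K i)) $$ (p,p') =
      (\<Sum>b\<in>{0..<m}. W$$(p div n,b)*W$$(p' div n,b) * (K i b * transpose_mat (K i b))$$(p mod n, p' mod n))"
      by (rule block_prod[where K=K and i=i and j=i, OF Kc Kc n p p'])
    also have "\<dots> = (\<Sum>b\<in>{0..<m}. W$$(p div n,b)*W$$(p' div n,b) * (if p mod n = p' mod n then 1 else 0))"
      using perm_PPt[OF Kp modlt[OF p] modlt[OF p']] by (intro sum.cong) auto
    also have "\<dots> = (if p mod n = p' mod n then (W * transpose_mat W) $$ (p div n, p' div n) else 0)"
      using mult_transpose_index[OF Wc Wc divlt[OF p] divlt[OF p']] by simp
    also have "\<dots> = (if p mod n = p' mod n then (if p div n = p' div n then int k else 0) else 0)"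
      using WW divlt[OF p] divlt[OF p'] by simp
    also have "\<dots> = (of_nat k \<cdot>\<^sub>m 1\<^sub>m (n*m) :: int mat) $$ (p,p')"
      using p p' eq_divmod[OF n, of p p'] by auto
    finally show "(block_W n m W K i * transpose_mat (block_W n m W K i)) $$ (p,p') = (of_nat k \<cdot>\<^sub>m 1\<^sub>m (n*m) :: int mat) $$ (p,p')" .
  qed (auto simp: block_W_def)
  show ?thesis unfolding weighing_matrix_def using block_carrier entries prod by blast
qed


lemma cross_entries:
  fixes W :: "int mat"
  assumes n: "0 < n" and Wm: "weighing_matrix m k W"
    and Kpi: "\<And>b. b<m \<Longrightarrow> perm_matrix n (K i b)"
    and Kpj: "\<And>b. b<m \<Longrightarrow> perm_matrix n (K j b)"
    and zo: "zero_one_mat (mat n n (\<lambda>(r,s). \<Sum>l<m. (K i l * transpose_mat (K j l)) $$ (r,s)))"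
    and p: "p < n*m" and p': "p' < n*m"
  shows "(block_W n m W K i * transpose_mat (block_W n m W K j)) $$ (p,p') \<in> {0,1,-1}"
proof -
  have We: "\<forall>i<m. \<forall>j<m. W $$ (i,j) \<in> {0, 1, -1}" using Wm unfolding weighing_matrix_def by auto
  have Kci: "\<And>b. b<m \<Longrightarrow> K i b \<in> carrier_mat n n" using Kpi unfolding perm_matrix_def by auto
  have Kcj: "\<And>b. b<m \<Longrightarrow> K j b \<in> carrier_mat n n" using Kpj unfolding perm_matrix_def by auto
  have Kei: "\<And>b r s. b<m \<Longrightarrow> r<n \<Longrightarrow> s<n \<Longrightarrow> K i b $$ (r,s) \<in> {0,1}"
    using Kpi Kci unfolding perm_matrix_def zero_one_mat_def by (metis carrier_matD)
  have Kej: "\<And>b r s. b<m \<Longrightarrow> r<n \<Longrightarrow> s<n \<Longrightarrow> K j b $$ (r,s) \<in> {0,1}"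
    using Kpj Kcj unfolding perm_matrix_def zero_one_mat_def by (metis carrier_matD)
  define r where "r = p mod n"
  define r' where "r' = p' mod n"
  define a where "a = p div n"
  define a' where "a' = p' div n"
  have r: "r < n" "r' < n" using modlt[OF p] modlt[OF p'] r_def r'_def by auto
  have a: "a < m" "a' < m" using divlt[OF p] divlt[OF p'] a_def a'_def by auto
  define Q where "Q b = (K i b * transpose_mat (K j b)) $$ (r,r')" for b
  have Qnn: "Q b \<ge> 0" if b: "b \<in> {0..<m}" for b
  proof -
    have "Q b = (\<Sum>s\<in>{0..<n}. K i b $$ (r,s) * K j b $$ (r',s))"
      unfolding Q_def using mult_transpose_index[OF Kci Kcj r, of b b] b by simp
    also have "\<dots> \<ge> 0"
    proof (rule sum_nonneg)
      fix s assume s: "s \<in> {0..<n}"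
      have "K i b $$ (r,s) \<ge> 0" "K j b $$ (r',s) \<ge> 0"
        using Kei[of b r s] Kej[of b r' s] b s r by auto
      then show "K i b $$ (r,s) * K j b $$ (r',s) \<ge> 0" by simp
    qed
    finally show ?thesis .
  qed
  have S: "(\<Sum>b\<in>{0..<m}. Q b) \<le> 1"
  proof -
    have "mat n n (\<lambda>(r,s). \<Sum>l<m. (K i l * transpose_mat (K j l)) $$ (r,s)) $$ (r,r') \<in> {0,1}"
      using zo r unfolding zero_one_mat_def by auto
    then have "(\<Sum>l<m. (K i l * transpose_mat (K j l)) $$ (r,r')) \<in> {0,1}" using r by simp
    then show ?thesis unfolding Q_def by (auto simp: atLeast0LessThan)
  qed
  have x: "(block_W n m W K i * transpose_mat (block_W n m W K j)) $$ (p,p') =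
      (\<Sum>b\<in>{0..<m}. W$$(a,b)*W$$(a',b) * Q b)"
    unfolding Q_def a_def a'_def r_def r'_def by (rule block_prod[OF Kci Kcj n p p'])
  have "\<bar>\<Sum>b\<in>{0..<m}. W$$(a,b)*W$$(a',b) * Q b\<bar> \<le> (\<Sum>b\<in>{0..<m}. \<bar>W$$(a,b)*W$$(a',b) * Q b\<bar>)"
    by (rule sum_abs)
  also have "\<dots> \<le> (\<Sum>b\<in>{0..<m}. Q b)"
  proof (rule sum_mono)
    fix b assume b: "b \<in> {0..<m}"
    have "W$$(a,b) \<in> {0,1,-1}" "W$$(a',b) \<in> {0,1,-1}" using We a b by auto
    then have "\<bar>W$$(a,b)*W$$(a',b)\<bar> \<le> 1" by auto
    then have "\<bar>W$$(a,b)*W$$(a',b)\<bar> * Q b \<le> 1 * Q b" using Qnn[OF b] by (intro mult_right_mono) auto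
    then show "\<bar>W$$(a,b)*W$$(a',b) * Q b\<bar> \<le> Q b" using Qnn[OF b] by (simp add: abs_mult)
  qed
  also have "\<dots> \<le> 1" by (rule S)
  finally show ?thesis unfolding x by auto
qed


lemma real_qu:
  fixes A B :: "int mat"
  assumes A: "weighing_matrix N k A" and B: "weighing_matrix N k B" and k: "0 < k"
    and e: "\<forall>p<N. \<forall>q<N. (A * transpose_mat B) $$ (p,q) \<in> {0,1,-1}"
  shows "weighing_matrix N (k^2) ((1 / sqrt (real 1)) \<cdot>\<^sub>m
        (map_mat real_of_int A * transpose_mat (map_mat real_of_int B)))"
proof -
  have Ac: "A \<in> carrier_mat N N" and AA: "A * transpose_mat A = of_nat k \<cdot>\<^sub>m 1\<^sub>m N"
    using A unfolding weighing_matrix_def by auto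
  have Bc: "B \<in> carrier_mat N N" and BB: "B * transpose_mat B = of_nat k \<cdot>\<^sub>m 1\<^sub>m N"
    using B unfolding weighing_matrix_def by auto
  define RA where "RA = map_mat real_of_int A"
  define RB where "RB = map_mat real_of_int B"
  have RAc: "RA \<in> carrier_mat N N" "transpose_mat RA \<in> carrier_mat N N" using Ac RA_def by auto
  have RBc: "RB \<in> carrier_mat N N" "transpose_mat RB \<in> carrier_mat N N" using Bc RB_def by auto
  have hom: "map_mat real_of_int (X * transpose_mat Y) = map_mat real_of_int X * transpose_mat (map_mat real_of_int Y)"
    if "X \<in> carrier_mat N N" "Y \<in> carrier_mat N N" for X Y :: "int mat"
    using of_int_hom.mat_hom_mult[of X N N "transpose_mat Y" N] that by (simp add: map_mat_transpose)
  have sc: "map_mat real_of_int (of_nat k \<cdot>\<^sub>m 1\<^sub>m N) = real k \<cdot>\<^sub>m 1\<^sub>m N"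
    by (rule eq_matI) auto
  have RAA: "RA * transpose_mat RA = real k \<cdot>\<^sub>m 1\<^sub>m N"
    using hom[OF Ac Ac] AA sc RA_def by simp
  have RBB: "RB * transpose_mat RB = real k \<cdot>\<^sub>m 1\<^sub>m N"
    using hom[OF Bc Bc] BB sc RB_def by simp
  have "RB * ((1 / real k) \<cdot>\<^sub>m transpose_mat RB) = 1\<^sub>m N"
    using mult_smult_distrib[OF RBc] RBB k by (auto intro!: eq_matI)
  then have inv: "((1 / real k) \<cdot>\<^sub>m transpose_mat RB) * RB = 1\<^sub>m N"
    by (intro mat_mult_left_right_inverse[OF RBc(1)]) (use RBc in auto)
  have BtB: "transpose_mat RB * RB = real k \<cdot>\<^sub>m 1\<^sub>m N"
  proof -
    have "(1 / real k) \<cdot>\<^sub>m (transpose_mat RB * RB) = 1\<^sub>m N"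
      using inv mult_smult_assoc_mat[OF RBc(2) RBc(1)] by simp
    then have "real k \<cdot>\<^sub>m ((1 / real k) \<cdot>\<^sub>m (transpose_mat RB * RB)) = real k \<cdot>\<^sub>m 1\<^sub>m N" by simp
    moreover have "real k \<cdot>\<^sub>m ((1 / real k) \<cdot>\<^sub>m (transpose_mat RB * RB)) = transpose_mat RB * RB"
      using k by (auto intro!: eq_matI)
    ultimately show ?thesis by simp
  qed
  define M where "M = RA * transpose_mat RB"
  have Mc: "M \<in> carrier_mat N N" using RAc RBc M_def by auto
  have Mt: "transpose_mat M = RB * transpose_mat RA"
    unfolding M_def using transpose_mult[OF RAc(1) RBc(2)] by simp
  have "M * transpose_mat M = M * (RB * transpose_mat RA)" by (simp add: Mt)
  also have "\<dots> = RA * (transpose_mat RB * RB) * transpose_mat RA"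
    unfolding M_def using RAc RBc by (simp add: assoc_mult_mat[of _ N N _ N _ N])
  also have "\<dots> = RA * (real k \<cdot>\<^sub>m 1\<^sub>m N) * transpose_mat RA" using BtB by simp
  also have "\<dots> = real k \<cdot>\<^sub>m (RA * transpose_mat RA)"
    using RAc by (simp add: mult_smult_distrib[of _ N N _ N] mult_smult_assoc_mat[of _ N N _ N])
  also have "\<dots> = of_nat (k^2) \<cdot>\<^sub>m 1\<^sub>m N" using RAA by (auto intro!: eq_matI simp: power2_eq_square)
  finally have MM: "M * transpose_mat M = of_nat (k^2) \<cdot>\<^sub>m 1\<^sub>m N" .
  have Meq: "M = map_mat real_of_int (A * transpose_mat B)" using hom[OF Ac Bc] M_def RA_def RB_def by simp
  have Me: "\<forall>p<N. \<forall>q<N. M $$ (p,q) \<in> {0,1,-1}"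
  proof (intro allI impI)
    fix p q assume pq: "p<N" "q<N"
    have "M $$ (p,q) = real_of_int ((A * transpose_mat B) $$ (p,q))" using Meq pq Ac Bc by simp
    moreover have "(A * transpose_mat B) $$ (p,q) \<in> {0,1,-1}" using e pq by blast
    ultimately show "M $$ (p,q) \<in> {0,1,-1}" by (auto simp del: of_int_eq_iff)
  qed
  have one: "(1 / sqrt (real 1)) \<cdot>\<^sub>m M = M" by (auto intro!: eq_matI)
  show ?thesis unfolding M_def[symmetric] RA_def[symmetric] RB_def[symmetric] one
    unfolding weighing_matrix_def using Mc Me MM by blast
qed


theorem lemma4p6:
  fixes n m k :: nat and W :: "int mat" and K :: "nat \<Rightarrow> nat \<Rightarrow> int mat"
  assumes "0 < n" and "0 < m" and "0 < k" and "m \<le> n"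
    and "weighing_matrix m k W"
    and "\<And>i j. i < m \<Longrightarrow> j < m \<Longrightarrow> perm_matrix n (K i j)"
    and "\<And>i j. i < m \<Longrightarrow> j < m \<Longrightarrow> i \<noteq> j \<Longrightarrow>
           zero_one_mat (mat n n (\<lambda>(r,s). \<Sum>l<m. (K i l * transpose_mat (K j l)) $$ (r,s)))"
  shows "(\<forall>i<m. weighing_matrix (n*m) k (block_W n m W K i)) \<and>
         (\<forall>i<m. \<forall>j<m. i \<noteq> j \<longrightarrow>
            quasi_unbiased (n*m) k (k^2) 1 (block_W n m W K i) (block_W n m W K j))"
proof -
  have w: "weighing_matrix (n*m) k (block_W n m W K i)" if "i < m" for i
    using block_weighing[OF assms(1) assms(5)] assms(6) that by blast
  have q: "quasi_unbiased (n*m) k (k^2) 1 (block_W n m W K i) (block_W n m W K j)"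
    if ij: "i < m" "j < m" "i \<noteq> j" for i j
  proof -
    have e: "\<forall>p<n*m. \<forall>q<n*m. (block_W n m W K i * transpose_mat (block_W n m W K j)) $$ (p,q) \<in> {0,1,-1}"
      using cross_entries[OF assms(1) assms(5), of K i j] assms(6,7) ij by blast
    show ?thesis unfolding quasi_unbiased_def
      using w[OF ij(1)] w[OF ij(2)] real_qu[OF w[OF ij(1)] w[OF ij(2)] assms(3) e] by blast
  qed
  show ?thesis using w q by blast
qed

end
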